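(* Let $P$ be an $n$-element poset, $L$ a labeling of $P$, and $x,y\in P$ with $y<_P x$. Fix $\gamma\in\{1,\ldots,n-2\}$ and suppose $L_\gamma(y)>L_\gamma(x)$. Then $L_\gamma(y)=L_{\gamma-1}(y)-1$ (i.e. $y$ is not in the promotion chain of $L_{\gamma-1}$), and moreover $L_{\gamma-1}(y)>L_{\gamma-1}(x)$.
   Context: A labeling of an $n$-element poset $P$ is a bijection $L:P\to[n]$. For a non-maximal $x\in P$, the $L$-successor of $x$ is the element $y>_P x$ with minimal label. The promotion chain of $L$ is $v_1<_P\cdots<_P v_m$ with $v_1=L^{-1}(1)$, $v_{i+1}$ the $L$-successor of $v_i$, and $v_m$ the first maximal element reached. Promotion: $\partial(L)(x)=L(x)-1$ if $x$ is not in the promotion chain; $\partial(L)(v_i)=L(v_{i+1})-1$ for $i<m$; $\partial(L)(v_m)=n$. Write $L_\gamma=\partial^\gamma(L)$, $L_0=L$. *)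

theory Defs
  imports Main
begin

definition strict_poset :: "'a set \<Rightarrow> ('a \<Rightarrow> 'a \<Rightarrow> bool) \<Rightarrow> bool" where
  "strict_poset P lt \<longleftrightarrow>
     (\<forall>x\<in>P. \<not> lt x x) \<and>
     (\<forall>x\<in>P. \<forall>y\<in>P. \<forall>z\<in>P. lt x y \<longrightarrow> lt y z \<longrightarrow> lt x z)"

definition labeling :: "'a set \<Rightarrow> ('a \<Rightarrow> nat) \<Rightarrow> bool" where
  "labeling P L \<longleftrightarrow> bij_betw L P {1..card P}"

definition is_maximal :: "'a set \<Rightarrow> ('a \<Rightarrow> 'a \<Rightarrow> bool) \<Rightarrow> 'a \<Rightarrow> bool" where
  "is_maximal P lt x \<longleftrightarrow> x \<in> P \<and> \<not> (\<exists>y\<in>P. lt x y)"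

definition successor :: "'a set \<Rightarrow> ('a \<Rightarrow> 'a \<Rightarrow> bool) \<Rightarrow> ('a \<Rightarrow> nat) \<Rightarrow> 'a \<Rightarrow> 'a" where
  "successor P lt L x =
     (THE y. y \<in> P \<and> lt x y \<and> (\<forall>z\<in>P. lt x z \<longrightarrow> L y \<le> L z))"

text \<open>The i-th element (0-based) of the iteration v1, succ v1, succ (succ v1), ...\<close>
definition chain_elem :: "'a set \<Rightarrow> ('a \<Rightarrow> 'a \<Rightarrow> bool) \<Rightarrow> ('a \<Rightarrow> nat) \<Rightarrow> nat \<Rightarrow> 'a" where
  "chain_elem P lt L i = (successor P lt L ^^ i) (the_inv_into P L 1)"

text \<open>The promotion chain: v1, ..., vm with vm the first maximal element reached.\<close>
definition promotion_chain :: "'a set \<Rightarrow> ('a \<Rightarrow> 'a \<Rightarrow> bool) \<Rightarrow> ('a \<Rightarrow> nat) \<Rightarrow> 'a set" where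
  "promotion_chain P lt L =
     {chain_elem P lt L i | i. \<forall>j<i. \<not> is_maximal P lt (chain_elem P lt L j)}"

definition promotion :: "'a set \<Rightarrow> ('a \<Rightarrow> 'a \<Rightarrow> bool) \<Rightarrow> ('a \<Rightarrow> nat) \<Rightarrow> ('a \<Rightarrow> nat)" where
  "promotion P lt L = (\<lambda>x.
     if x \<in> promotion_chain P lt L then
       (if is_maximal P lt x then card P else L (successor P lt L x) - 1)
     else L x - 1)"

end

theory Submission
  imports Defs
begin

locale prom =
  fixes P :: "'a set" and lt :: "'a \<Rightarrow> 'a \<Rightarrow> bool" and L :: "'a \<Rightarrow> nat"
  assumes fin: "finite P" and sp: "strict_poset P lt" and lab: "labeling P L"
    and nonempty: "P \<noteq> {}"
begin

lemma irr: "x\<in>P \<Longrightarrow> \<not> lt x x" using sp unfolding strict_poset_def by blast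
lemma trans: "x\<in>P \<Longrightarrow> y\<in>P \<Longrightarrow> z\<in>P \<Longrightarrow> lt x y \<Longrightarrow> lt y z \<Longrightarrow> lt x z"
  using sp unfolding strict_poset_def by blast
lemma inj: "inj_on L P" using lab unfolding labeling_def bij_betw_def by blast
lemma Lrange: "x\<in>P \<Longrightarrow> L x \<in> {1..card P}" using lab unfolding labeling_def bij_betw_def by blast
lemma Lsurj: "k\<in>{1..card P} \<Longrightarrow> \<exists>x\<in>P. L x = k" using lab unfolding labeling_def bij_betw_def by (metis imageE)

lemma succ:
  assumes "x\<in>P" "\<not> is_maximal P lt x"
  shows "successor P lt L x \<in> P \<and> lt x (successor P lt L x) \<and> (\<forall>z\<in>P. lt x z \<longrightarrow> L (successor P lt L x) \<le> L z)"
proof -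
  let ?S = "{z\<in>P. lt x z}"
  have "\<exists>z\<in>P. lt x z" using assms unfolding is_maximal_def by blast
  then have ne: "?S \<noteq> {}" by blast
  have f: "finite ?S" using fin by auto
  have "Min (L ` ?S) \<in> L ` ?S" using ne f by (intro Min_in) auto
  then obtain y where y: "y \<in> ?S" "L y = Min (L ` ?S)" by auto
  have ymin: "\<forall>z\<in>?S. L y \<le> L z" using y f by auto
  have "successor P lt L x = y" unfolding successor_def
  proof (rule the_equality)
    show "y \<in> P \<and> lt x y \<and> (\<forall>z\<in>P. lt x z \<longrightarrow> L y \<le> L z)" using y ymin by auto
  next
    fix w assume w: "w \<in> P \<and> lt x w \<and> (\<forall>z\<in>P. lt x z \<longrightarrow> L w \<le> L z)"
    have "L w \<le> L y" using w y by blast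
    moreover have "L y \<le> L w" using ymin w by blast
    ultimately have "L w = L y" by simp
    then show "w = y" using inj_onD[OF inj] w y by blast
  qed
  then show ?thesis using y ymin by auto
qed

abbreviation ce where "ce i \<equiv> chain_elem P lt L i"

lemma ce0: "ce 0 \<in> P" "L (ce 0) = 1"
proof -
  have "1 \<in> {1..card P}" using fin nonempty by (simp add: Suc_leI card_gt_0_iff)
  then have "1 \<in> L ` P" using Lsurj by force
  then show "ce 0 \<in> P" "L (ce 0) = 1" unfolding chain_elem_def
    using inj by (auto intro: the_inv_into_into f_the_inv_into_f)
qed

lemma ceSuc: "ce (Suc i) = successor P lt L (ce i)" by (simp add: chain_elem_def)

lemma ce_in: "(\<forall>j<i. \<not> is_maximal P lt (ce j)) \<Longrightarrow> ce i \<in> P"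
proof (induction i)
  case 0 then show ?case using ce0 by simp
next
  case (Suc i) then show ?case using succ[of "ce i"] ceSuc by auto
qed

lemma ce_lt: "i < j \<Longrightarrow> (\<forall>k<j. \<not> is_maximal P lt (ce k)) \<Longrightarrow> lt (ce i) (ce j)"
proof (induction j)
  case 0 then show ?case by simp
next
  case (Suc j)
  have inj': "ce j \<in> P" using ce_in Suc.prems by auto
  have s: "ce (Suc j) \<in> P \<and> lt (ce j) (ce (Suc j))"
    using succ[of "ce j"] inj' Suc.prems ceSuc by auto
  show ?case
  proof (cases "i = j")
    case True then show ?thesis using s by simp
  next
    case False
    then have "lt (ce i) (ce j)" using Suc by auto
    moreover have "ce i \<in> P" using ce_in Suc.prems by auto
    ultimately show ?thesis using s inj' trans by blast
  qed
qed

lemma ex_max: "\<exists>i. is_maximal P lt (ce i)"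
proof (rule ccontr)
  assume a: "\<not> ?thesis"
  have "inj ce"
  proof (rule injI)
    fix i j assume e: "ce i = ce j"
    show "i = j"
    proof (rule ccontr)
      assume "i \<noteq> j"
      then have "i < j \<or> j < i" by auto
      then show False
      proof
        assume "i < j"
        then have "lt (ce i) (ce j)" using ce_lt[of i j] a by auto
        then show False using e irr[OF ce_in[of j]] a by auto
      next
        assume "j < i"
        then have "lt (ce j) (ce i)" using ce_lt[of j i] a by auto
        then show False using e irr[OF ce_in[of j]] a by auto
      qed
    qed
  qed
  moreover have "range ce \<subseteq> P" using ce_in a by auto
  ultimately have "finite (range ce)" using fin finite_subset by blast
  then have "finite (UNIV :: nat set)" using \<open>inj ce\<close> finite_imageD by blast
  then show False by simp
qed

definition m where "m = (LEAST i. is_maximal P lt (ce i))"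

lemma m_max: "is_maximal P lt (ce m)" unfolding m_def by (rule LeastI_ex[OF ex_max])
lemma before_m: "j < m \<Longrightarrow> \<not> is_maximal P lt (ce j)" unfolding m_def by (rule not_less_Least)

lemma chain_eq: "promotion_chain P lt L = ce ` {..m}"
proof -
  have "(\<forall>j<i. \<not> is_maximal P lt (ce j)) \<longleftrightarrow> i \<le> m" for i
  proof
    assume "\<forall>j<i. \<not> is_maximal P lt (ce j)"
    then show "i \<le> m" using m_max by (metis not_le)
  next
    assume "i \<le> m"
    then show "\<forall>j<i. \<not> is_maximal P lt (ce j)" using before_m by auto
  qed
  then show ?thesis unfolding promotion_chain_def by auto
qed

lemma ce_inP: "i \<le> m \<Longrightarrow> ce i \<in> P" using ce_in before_m by auto

lemma ce_inj: "i \<le> m \<Longrightarrow> j \<le> m \<Longrightarrow> ce i = ce j \<Longrightarrow> i = j"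
proof (rule ccontr)
  assume a: "i \<le> m" "j \<le> m" "ce i = ce j" "i \<noteq> j"
  then have "i < j \<or> j < i" by auto
  then show False
  proof
    assume "i < j"
    then have "lt (ce i) (ce j)" using ce_lt[of i j] a(2) before_m by auto
    then show False using a(3) irr[OF ce_inP[OF a(2)]] by simp
  next
    assume "j < i"
    then have "lt (ce j) (ce i)" using ce_lt[of j i] a(1) before_m by auto
    then show False using a(3) irr[OF ce_inP[OF a(2)]] by simp
  qed
qed

lemma prom_range: "promotion P lt L ` P = {1..card P}"
proof
  show "promotion P lt L ` P \<subseteq> {1..card P}"
  proof
    fix k assume "k \<in> promotion P lt L ` P"
    then obtain z where z: "z \<in> P" "k = promotion P lt L z" by auto
    show "k \<in> {1..card P}"
    proof (cases "z \<in> promotion_chain P lt L")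
      case True
      then obtain i where i: "i \<le> m" "z = ce i" using chain_eq by auto
      show ?thesis
      proof (cases "is_maximal P lt z")
        case True then show ?thesis using z \<open>z \<in> promotion_chain P lt L\<close> fin nonempty
          by (simp add: promotion_def Suc_leI card_gt_0_iff)
      next
        case False
        then have "i \<noteq> m" using i m_max by auto
        then have im: "Suc i \<le> m" using i by auto
        have "ce (Suc i) \<noteq> ce 0" using ce_inj[OF im] by auto
        then have "L (ce (Suc i)) \<noteq> 1" using inj ce0 ce_inP[OF im] by (metis inj_onD)
        moreover have "L (ce (Suc i)) \<in> {1..card P}" using Lrange ce_inP[OF im] by auto
        ultimately show ?thesis using z True False i ceSuc
          by (auto simp: promotion_def)
      qed
    next
      case False
      then have "z \<noteq> ce 0" using chain_eq by auto
      then have "L z \<noteq> 1" using inj ce0 z by (metis inj_onD)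
      then show ?thesis using Lrange[OF z(1)] z False by (auto simp: promotion_def)
    qed
  qed
next
  show "{1..card P} \<subseteq> promotion P lt L ` P"
  proof
    fix k assume k: "k \<in> {1..card P}"
    show "k \<in> promotion P lt L ` P"
    proof (cases "k = card P")
      case True
      have "ce m \<in> promotion_chain P lt L" using chain_eq by auto
      then have "promotion P lt L (ce m) = k" using m_max True by (simp add: promotion_def)
      then show ?thesis using ce_inP by force
    next
      case False
      then have "k + 1 \<in> {1..card P}" using k by auto
      then obtain z where z: "z \<in> P" "L z = k + 1" using Lsurj by blast
      show ?thesis
      proof (cases "z \<in> promotion_chain P lt L")
        case True
        then obtain j where j: "j \<le> m" "z = ce j" using chain_eq by auto
        have "j \<noteq> 0"
        proof
          assume "j = 0"
          then have "L z = 1" using j ce0 by simp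
          then show False using z k by simp
        qed
        then obtain i where i: "j = Suc i" by (cases j) auto
        have im: "i < m" using i j by auto
        have "ce i \<in> promotion_chain P lt L" using chain_eq im by auto
        then have "promotion P lt L (ce i) = k" using before_m[OF im] z j i ceSuc
          by (simp add: promotion_def)
        then show ?thesis using ce_inP im by force
      next
        case False
        then have "promotion P lt L z = k" using z by (simp add: promotion_def)
        then show ?thesis using z by force
      qed
    qed
  qed
qed

lemma prom_lab: "labeling P (promotion P lt L)"
proof -
  have "card (promotion P lt L ` P) = card P" using prom_range by simp
  then have "inj_on (promotion P lt L) P" using fin eq_card_imp_inj_on by blast
  then show ?thesis unfolding labeling_def bij_betw_def using prom_range by simp
qed

lemma key:
  assumes x: "x \<in> P" and y: "y \<in> P" and yx: "lt y x"
    and gt: "promotion P lt L y > promotion P lt L x"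
  shows "y \<notin> promotion_chain P lt L \<and> L y > L x"
proof -
  have ynm: "\<not> is_maximal P lt y" unfolding is_maximal_def using x yx by blast
  have ny: "y \<notin> promotion_chain P lt L"
  proof
    assume yc: "y \<in> promotion_chain P lt L"
    have sy: "successor P lt L y \<in> P \<and> lt y (successor P lt L y) \<and> (\<forall>z\<in>P. lt y z \<longrightarrow> L (successor P lt L y) \<le> L z)"
      using succ[OF y ynm] .
    have py: "promotion P lt L y = L (successor P lt L y) - 1" using yc ynm by (simp add: promotion_def)
    show False
    proof (cases "x \<in> promotion_chain P lt L")
      case False
      then have "promotion P lt L x = L x - 1" by (simp add: promotion_def)
      moreover have "L (successor P lt L y) \<le> L x" using sy x yx by blast
      ultimately show False using gt py by linarith
    next
      case xc: True
      show False
      proof (cases "is_maximal P lt x")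
        case True
        then have "promotion P lt L x = card P" using xc by (simp add: promotion_def)
        moreover have "L (successor P lt L y) \<le> card P" using Lrange[of "successor P lt L y"] sy by simp
        ultimately show False using gt py by linarith
      next
        case False
        have sx: "successor P lt L x \<in> P \<and> lt x (successor P lt L x)" using succ[OF x False] by blast
        then have "lt y (successor P lt L x)" using trans x y yx by blast
        then have "L (successor P lt L y) \<le> L (successor P lt L x)" using sy sx by blast
        moreover have "promotion P lt L x = L (successor P lt L x) - 1" using xc False by (simp add: promotion_def)
        ultimately show False using gt py by linarith
      qed
    qed
  qed
  have py: "promotion P lt L y = L y - 1" using ny by (simp add: promotion_def)
  have "L y > L x"
  proof (cases "x \<in> promotion_chain P lt L")
    case False
    then have "promotion P lt L x = L x - 1" by (simp add: promotion_def)
    then show ?thesis using gt py by linarith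
  next
    case xc: True
    show ?thesis
    proof (cases "is_maximal P lt x")
      case True
      then have "promotion P lt L x = card P" using xc by (simp add: promotion_def)
      moreover have "L y \<le> card P" using Lrange[OF y] by simp
      ultimately show ?thesis using gt py by linarith
    next
      case False
      have sx: "successor P lt L x \<in> P \<and> lt x (successor P lt L x)" using succ[OF x False] by blast
      have "promotion P lt L x = L (successor P lt L x) - 1" using xc False by (simp add: promotion_def)
      then have lt1: "L y > L (successor P lt L x)" using gt py by linarith
      obtain j where j: "j \<le> m" "x = ce j" using xc chain_eq by auto
      show ?thesis
      proof (cases j)
        case 0
        have "L (successor P lt L x) \<ge> 1" using Lrange[of "successor P lt L x"] sx by simp
        then show ?thesis using j ce0 lt1 0 by simp
      next
        case (Suc i)
        have im: "i < m" using Suc j by auto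
        have ci: "ce i \<in> P" using ce_inP im by auto
        have s: "lt (ce i) x \<and> (\<forall>z\<in>P. lt (ce i) z \<longrightarrow> L x \<le> L z)"
          using succ[OF ci before_m[OF im]] j Suc ceSuc by auto
        then have "lt (ce i) (successor P lt L x)" using trans ci x sx by blast
        then have "L x \<le> L (successor P lt L x)" using s sx by blast
        then show ?thesis using lt1 by simp
      qed
    qed
  qed
  then show ?thesis using ny by simp
qed

end

lemma iter_lab:
  assumes "finite P" "strict_poset P lt" "labeling P L" "P \<noteq> {}"
  shows "labeling P ((promotion P lt ^^ k) L)"
proof (induction k)
  case 0 then show ?case using assms by simp
next
  case (Suc k)
  interpret prom P lt "(promotion P lt ^^ k) L" by (rule prom.intro[OF assms(1,2) Suc.IH assms(4)])
  have "(promotion P lt ^^ Suc k) L = promotion P lt ((promotion P lt ^^ k) L)" by simp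
  then show ?case using prom_lab by (simp only:)
qed

theorem mainTheorem2:
  fixes P :: "'a set" and lt :: "'a \<Rightarrow> 'a \<Rightarrow> bool" and L :: "'a \<Rightarrow> nat"
    and n :: nat and x y :: 'a and \<gamma> :: nat
  assumes "finite P" and "strict_poset P lt" and "card P = n"
    and "labeling P L"
    and "x \<in> P" and "y \<in> P" and "lt y x"
    and "1 \<le> \<gamma>" and "\<gamma> \<le> n - 2"
    and "(promotion P lt ^^ \<gamma>) L y > (promotion P lt ^^ \<gamma>) L x"
  shows "(promotion P lt ^^ \<gamma>) L y = (promotion P lt ^^ (\<gamma> - 1)) L y - 1
    \<and> y \<notin> promotion_chain P lt ((promotion P lt ^^ (\<gamma> - 1)) L)
    \<and> (promotion P lt ^^ (\<gamma> - 1)) L y > (promotion P lt ^^ (\<gamma> - 1)) L x"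
proof -
  have ne: "P \<noteq> {}" using assms(5) by auto
  define M where "M = (promotion P lt ^^ (\<gamma> - 1)) L"
  obtain k where kg: "\<gamma> = Suc k" using assms(8) by (cases \<gamma>) auto
  have g: "(promotion P lt ^^ \<gamma>) L = promotion P lt M"
    unfolding M_def kg by simp
  have lm: "labeling P M" unfolding M_def by (rule iter_lab[OF assms(1,2,4) ne])
  interpret prom P lt M by (rule prom.intro[OF assms(1,2) lm ne])
  have k: "y \<notin> promotion_chain P lt M \<and> M y > M x"
  proof -
    have "promotion P lt M y > promotion P lt M x" using assms(10) unfolding g .
    then show ?thesis by (rule key[OF assms(5,6,7)])
  qed
  then have "promotion P lt M y = M y - 1" unfolding promotion_def by simp
  then show ?thesis using k unfolding g M_def[symmetric] by blast
qed

end
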